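(* Let $p\in\mathbb{R}$ and let $\gamma$ be a $p$-elastic curve in $\mathbb{S}^2$ whose curvature is a non-constant periodic function of arc length. Then either $p=2$ or $p\in(0,1)$.
   Context: $\mathbb{S}^2$ is the unit sphere in $\mathbb{R}^3$ with the induced metric. For an immersed curve $\gamma$ in $\mathbb{S}^2$ parametrized by arc length $s$, let $T=\gamma'$, let $N$ be the rotation of $T$ by $+\pi/2$ in the tangent plane of $\mathbb{S}^2$, and define the geodesic curvature $\kappa$ by $\nabla_T T=\kappa N$. Curves are smooth (class $\mathcal{C}^4$ suffices). Here $\mathbb{N}$ includes $0$. The $p$-elastic functional is $\mathbf{\Theta}_p(\gamma)=\int_\gamma \kappa^p\,ds$; if $p\in\mathbb{R}\setminus\mathbb{N}$ it is considered only on convex curves ($\kappa>0$ everywhere). A $p$-elastic curve is a curve (convex if $p\notin\mathbb{N}$) whose curvature satisfies $$p\,\frac{d^2}{ds^2}\left(\kappa^{p-1}\right)+(p-1)\kappa^{p+1}+p\,\kappa^{p-1}=0.$$ *)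

theory Defs
  imports "HOL-Analysis.Analysis" "HOL-Analysis.Cross3"
begin

definition sphere_arclength_curve :: "(real \<Rightarrow> real^3) \<Rightarrow> bool" where
  "sphere_arclength_curve \<gamma> \<longleftrightarrow>
     (\<exists>g :: nat \<Rightarrow> real \<Rightarrow> real^3. g 0 = \<gamma> \<and>
        (\<forall>k<4. \<forall>s. (g k has_vector_derivative g (Suc k) s) (at s)) \<and>
        continuous_on UNIV (g 4)) \<and>
     (\<forall>s. norm (\<gamma> s) = 1) \<and>
     (\<forall>s. norm (vector_derivative \<gamma> (at s)) = 1)"

text \<open>Geodesic curvature: T = gamma', N = gamma \<times> T (rotation of T by +pi/2 in the
  tangent plane), kappa = <gamma'', N> = gamma . (T \<times> gamma'').\<close>
definition geod_curv :: "(real \<Rightarrow> real^3) \<Rightarrow> real \<Rightarrow> real" where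
  "geod_curv \<gamma> s =
     \<gamma> s \<bullet> (cross3 (vector_derivative \<gamma> (at s))
              (vector_derivative (\<lambda>t. vector_derivative \<gamma> (at t)) (at s)))"

text \<open>Powers x^(p+a) for a \<in> {-1, 1}: integer powers when p \<in> \<nat>, real powers otherwise
  (then only used for x > 0).\<close>
definition ppow :: "real \<Rightarrow> int \<Rightarrow> real \<Rightarrow> real" where
  "ppow p a x = (if p \<in> \<nat> then x powi (\<lfloor>p\<rfloor> + a) else x powr (p + of_int a))"

definition p_elastic_curve :: "real \<Rightarrow> (real \<Rightarrow> real^3) \<Rightarrow> bool" where
  "p_elastic_curve p \<gamma> \<longleftrightarrow>
     sphere_arclength_curve \<gamma> \<and>
     (p \<notin> \<nat> \<longrightarrow> (\<forall>s. geod_curv \<gamma> s > 0)) \<and>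
     (\<forall>s. p * deriv (deriv (\<lambda>t. ppow p (-1) (geod_curv \<gamma> t))) s
          + (p - 1) * ppow p 1 (geod_curv \<gamma> s)
          + p * ppow p (-1) (geod_curv \<gamma> s) = 0)"

end

theory Submission imports Defs begin

lemma periodic_rolle:
  fixes f f1 f2 :: "real \<Rightarrow> real"
  assumes d1: "\<And>s. (f has_real_derivative f1 s) (at s)"
    and d2: "\<And>s. (f1 has_real_derivative f2 s) (at s)"
    and nz: "\<And>s. f2 s \<noteq> 0" and L: "L > 0" and per: "\<And>s. f (s + L) = f s"
  shows False
proof -
  have cf: "continuous_on A f" for A
    by (intro continuous_at_imp_continuous_on ballI DERIV_isCont[OF d1])
  have cf1: "continuous_on A f1" for A
    by (intro continuous_at_imp_continuous_on ballI DERIV_isCont[OF d2])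
  have df: "f differentiable (at x)" for x using d1 real_differentiable_def by auto
  have df1: "f1 differentiable (at x)" for x using d2 real_differentiable_def by auto
  obtain c where c: "0 < c" "c < L" "DERIV f c :> 0"
    using Rolle[of 0 L f] L per[of 0] cf df by auto
  obtain d where d: "L < d" "d < L + L" "DERIV f d :> 0"
    using Rolle[of L "L+L" f] L per[of L] cf df by auto
  have "f1 c = 0" using DERIV_unique[OF d1 c(3)] .
  moreover have "f1 d = 0" using DERIV_unique[OF d1 d(3)] .
  ultimately obtain z where "c < z" "z < d" "DERIV f1 z :> 0"
    using Rolle[of c d f1] c d cf1 df1 by auto
  then have "f2 z = 0" using DERIV_unique[OF d2] by blast
  with nz show False by blast
qed

lemma triple_deriv:
  fixes a b c :: "real \<Rightarrow> real^3"
  assumes "(a has_vector_derivative a') (at s)" "(b has_vector_derivative b') (at s)"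
    "(c has_vector_derivative c') (at s)"
  shows "((\<lambda>t. a t \<bullet> cross3 (b t) (c t)) has_real_derivative
     (a s \<bullet> (cross3 (b s) c' + cross3 b' (c s)) + a' \<bullet> cross3 (b s) (c s))) (at s)"
proof -
  have bb: "bounded_bilinear cross3"
    using bilinear_cross bilinear_conv_bounded_bilinear by blast
  have "((\<lambda>t. cross3 (b t) (c t)) has_vector_derivative (cross3 (b s) c' + cross3 b' (c s))) (at s)"
    using bounded_bilinear.has_vector_derivative[OF bb assms(2,3)] .
  from bounded_bilinear.has_vector_derivative[OF bounded_bilinear_inner assms(1) this]
  show ?thesis unfolding has_real_derivative_iff_has_vector_derivative .
qed

lemma curv_C2:
  assumes "sphere_arclength_curve \<gamma>"
  shows "\<exists>k1 k2. \<forall>s. (geod_curv \<gamma> has_real_derivative k1 s) (at s) \<and> (k1 has_real_derivative k2 s) (at s)"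
proof -
  obtain g :: "nat \<Rightarrow> real \<Rightarrow> real^3" where g0: "g 0 = \<gamma>"
    and gd: "\<And>k s. k < 4 \<Longrightarrow> (g k has_vector_derivative g (Suc k) s) (at s)"
    using assms unfolding sphere_arclength_curve_def by blast
  have v1: "(\<lambda>t. vector_derivative \<gamma> (at t)) = g 1"
    using gd[of 0] g0 vector_derivative_at by fastforce
  have G0: "(g 0 has_vector_derivative g 1 s) (at s)" for s using gd[of 0] by simp
  have G1: "(g 1 has_vector_derivative g 2 s) (at s)" for s using gd[of 1] by (simp add: numeral_2_eq_2)
  have G2: "(g 2 has_vector_derivative g 3 s) (at s)" for s using gd[of 2] by (simp add: numeral_3_eq_3 numeral_2_eq_2)
  have G3: "(g 3 has_vector_derivative g 4 s) (at s)" for s using gd[of 3]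
    by (simp add: numeral_3_eq_3 eval_nat_numeral)
  have v2: "vector_derivative (g 1) (at s) = g 2 s" for s
    using G1 vector_derivative_at by blast
  have K: "geod_curv \<gamma> = (\<lambda>s. g 0 s \<bullet> cross3 (g 1 s) (g 2 s))"
    proof (rule ext)
    fix s
    have v1': "vector_derivative \<gamma> (at t) = g 1 t" for t using v1 by (rule fun_cong)
    show "geod_curv \<gamma> s = g 0 s \<bullet> cross3 (g 1 s) (g 2 s)"
      unfolding geod_curv_def v1' v2 g0 using v2 by simp
  qed
  define k1 where "k1 s = g 0 s \<bullet> cross3 (g 1 s) (g 3 s)" for s
  have "(geod_curv \<gamma> has_real_derivative k1 s) (at s)" for s
  proof -
    have "(geod_curv \<gamma> has_real_derivative
     (g 0 s \<bullet> (cross3 (g 1 s) (g 3 s) + cross3 (g 2 s) (g 2 s)) + g 1 s \<bullet> cross3 (g 1 s) (g 2 s))) (at s)"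
      unfolding K by (rule triple_deriv[OF G0 G1 G2])
    moreover have "g 0 s \<bullet> (cross3 (g 1 s) (g 3 s) + cross3 (g 2 s) (g 2 s)) + g 1 s \<bullet> cross3 (g 1 s) (g 2 s) = k1 s"
      by (simp add: k1_def dot_cross_self)
    ultimately show ?thesis by simp
  qed
  moreover define k2 where "k2 s = g 0 s \<bullet> (cross3 (g 1 s) (g 4 s) + cross3 (g 2 s) (g 3 s)) + g 1 s \<bullet> cross3 (g 1 s) (g 3 s)" for s
  moreover have "(k1 has_real_derivative k2 s) (at s)" for s
    unfolding k1_def[abs_def] k2_def by (rule triple_deriv[OF G0 G1 G3])
  ultimately show ?thesis by (intro exI[of _ k1] exI[of _ k2]) simp
qed


lemma ppow_nat: "ppow (real n) a x = x powi (int n + a)"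
  unfolding ppow_def by simp

theorem mainTheorem4:
  fixes p :: real and \<gamma> :: "real \<Rightarrow> real^3"
  assumes "p_elastic_curve p \<gamma>"
    and "\<exists>L>0. \<forall>s. geod_curv \<gamma> (s + L) = geod_curv \<gamma> s"
    and "\<exists>s1 s2. geod_curv \<gamma> s1 \<noteq> geod_curv \<gamma> s2"
  shows "p = 2 \<or> (0 < p \<and> p < 1)"
proof -
  define k where "k = geod_curv \<gamma>"
  define f where "f = (\<lambda>t. ppow p (-1) (k t))"
  have P: "sphere_arclength_curve \<gamma> \<and> (p \<notin> \<nat> \<longrightarrow> (\<forall>s. k s > 0)) \<and>
    (\<forall>s. p * deriv (deriv f) s + (p - 1) * ppow p 1 (k s) + p * ppow p (-1) (k s) = 0)"
    using assms(1) unfolding p_elastic_curve_def k_def f_def .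
  have sc: "sphere_arclength_curve \<gamma>" using P by blast
  have cv: "p \<notin> \<nat> \<Longrightarrow> k s > 0" for s using P by blast
  have eq: "p * deriv (deriv f) s + (p - 1) * ppow p 1 (k s) + p * ppow p (-1) (k s) = 0" for s
    using P by blast
  obtain k1 k2 where K1: "\<And>s. (k has_real_derivative k1 s) (at s)"
    and K2: "\<And>s. (k1 has_real_derivative k2 s) (at s)"
    using curv_C2[OF sc] unfolding k_def by blast
  obtain L where L: "L > 0" "\<And>s. k (s + L) = k s" using assms(2) unfolding k_def by blast
  have fper: "f (s + L) = f s" for s unfolding f_def using L by simp
  obtain s1 s2 where ne: "k s1 \<noteq> k s2" using assms(3) unfolding k_def by blast
  show ?thesis
  proof (cases "p \<in> \<nat>")
    case True
    then obtain n where pn: "p = real n" by (auto elim: Nats_cases)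
    consider "n = 0" | "n = 1" | "n = 2" | m where "n = m + 3"
    proof -
      have "n = 0 \<or> n = 1 \<or> n = 2 \<or> n = (n - 3) + 3" by arith
      then show thesis using that by blast
    qed
    then show ?thesis
    proof cases
      case 1
      have "k s = 0" for s using eq[of s] unfolding pn 1 ppow_nat by simp
      with ne show ?thesis by simp
    next
      case 2
      have "f = (\<lambda>t. 1)" unfolding f_def pn 2 ppow_nat by simp
      then have "deriv (deriv f) s = 0" for s by simp
      with eq[of 0] show ?thesis unfolding pn 2 ppow_nat by simp
    next
      case 3 then show ?thesis using pn by simp
    next
      case 4
      have pp1: "ppow p (-1) x = x^(m+2)" for x
      proof -
        have "int (m+3) + -1 = int (m+2)" by simp
        then show ?thesis unfolding pn 4 ppow_nat by (metis power_int_of_nat)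
      qed
      have pp2: "ppow p 1 x = x^(m+4)" for x
      proof -
        have "int (m+3) + 1 = int (m+4)" by simp
        then show ?thesis unfolding pn 4 ppow_nat by (metis power_int_of_nat)
      qed
      have fdef: "f = (\<lambda>t. k t ^ (m+2))" unfolding f_def pp1 ..
      define f1 where "f1 s = real (m+2) * k s^(m+1) * k1 s" for s
      define f2 where "f2 s = real (m+2) * (real (m+1) * k s^m * k1 s * k1 s + k s^(m+1) * k2 s)" for s
      have pw: "\<And>x::real. 0 < m \<Longrightarrow> x * x^(m - Suc 0) = x^m" by (case_tac m) auto
      have D1: "(f has_real_derivative f1 s) (at s)" for s
        unfolding fdef f1_def
        using pw by (auto intro!: derivative_eq_intros K1 simp: algebra_simps)
      have D2: "(f1 has_real_derivative f2 s) (at s)" for s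
        unfolding f1_def[abs_def] f2_def
        apply (rule DERIV_cong)
         apply (auto intro!: derivative_eq_intros K1 K2)[1]
        using pw[of "k s"] by (cases "m = 0") (auto simp: algebra_simps)
      have "deriv f = f1" using D1 DERIV_imp_deriv by blast
      moreover have "deriv f1 = f2" using D2 DERIV_imp_deriv by blast
      ultimately have eq2: "real (m+3) * f2 s + real (m+2) * k s^(m+4) + real (m+3) * k s^(m+2) = 0" for s
        using eq[of s] unfolding pp1 pp2 unfolding pn 4 by simp
      show ?thesis
      proof (cases "\<exists>s0. k s0 = 0")
        case False
        have "f2 s \<noteq> 0" for s
        proof
          assume "f2 s = 0"
          have k4: "k s^(m+4) = k s^(m+2) * (k s)^2"
            using power_add[of "k s" "m+2" 2] by (simp only: add.assoc numeral_Bit0 numeral_One one_plus_numeral)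
          with eq2[of s] \<open>f2 s = 0\<close> have "k s^(m+2) * (real (m+2) * (k s)^2 + real (m+3)) = 0"
            by (simp add: algebra_simps)
          moreover have "real (m+2) * (k s)^2 + real (m+3) > 0"
            by (simp add: add_nonneg_pos)
          ultimately show False using False by simp
        qed
        then show ?thesis using periodic_rolle[OF D1 D2 _ L(1) fper] by blast
      next
        case True
        then obtain s0 where s0: "k s0 = 0" by blast
        define E where "E s = real (m+3)^2 * (f1 s)^2 + real (m+2)^2 * (k s^(m+3))^2 + real (m+3)^2 * (k s^(m+2))^2" for s
        have DE: "(E has_real_derivative 0) (at s)" for s
        proof -
          have "(E has_real_derivative
            real (m+3)^2 * (2 * f1 s * f2 s) + real (m+2)^2 * (2 * k s^(m+3) * (real (m+3) * k s^(m+2) * k1 s))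
             + real (m+3)^2 * (2 * k s^(m+2) * (real (m+2) * k s^(m+1) * k1 s))) (at s)"
            unfolding E_def[abs_def]
            apply (rule DERIV_cong)
             apply (auto intro!: derivative_eq_intros K1 D2)[1]
            by (cases m) (simp_all add: algebra_simps power2_eq_square eval_nat_numeral)
          moreover have "real (m+3)^2 * (2 * f1 s * f2 s) + real (m+2)^2 * (2 * k s^(m+3) * (real (m+3) * k s^(m+2) * k1 s))
             + real (m+3)^2 * (2 * k s^(m+2) * (real (m+2) * k s^(m+1) * k1 s))
             = 2 * real (m+2) * real (m+3) * k s^(m+1) * k1 s *
               (real (m+3) * f2 s + real (m+2) * k s^(m+4) + real (m+3) * k s^(m+2))"
            unfolding f1_def by (simp add: algebra_simps power_add power2_eq_square eval_nat_numeral)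
          ultimately show ?thesis using eq2[of s] by simp
        qed
        have "E s = E s0" for s using DE DERIV_isconst_all by blast
        moreover have "E s0 = 0" unfolding E_def f1_def s0 by simp
        ultimately have "E s = 0" for s by simp
        then have "k s = 0" for s
        proof -
          have "0 \<le> real (m+3)^2 * (f1 s)^2" "0 \<le> real (m+2)^2 * (k s^(m+3))^2"
            "0 \<le> real (m+3)^2 * (k s^(m+2))^2" by simp_all
          with \<open>E s = 0\<close> have "real (m+3)^2 * (k s^(m+2))^2 = 0" unfolding E_def by linarith
          then show ?thesis by auto
        qed
        with ne show ?thesis by simp
      qed
    qed
  next
    case False
    have kp: "k s > 0" for s using cv[OF False] .
    have p01: "p \<noteq> 0" "p \<noteq> 1" using False by auto
    show ?thesis
    proof (cases "0 < p \<and> p < 1")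
      case True then show ?thesis by simp
    next
      case pc: False
      have pcase: "p < 0 \<or> 1 < p" using pc p01 by linarith
      have pp1: "ppow p (-1) x = x powr (p - 1)" for x unfolding ppow_def using False by simp
      have pp2: "ppow p 1 x = x powr (p + 1)" for x unfolding ppow_def using False by simp
      have fdef: "f = (\<lambda>t. k t powr (p - 1))" unfolding f_def pp1 ..
      define f1 where "f1 s = (p - 1) * k s powr (p - 1 - 1) * k1 s" for s
      define f2 where "f2 s = (p - 1) * ((p - 1 - 1) * k s powr (p - 1 - 1 - 1) * k1 s * k1 s
                 + k s powr (p - 1 - 1) * k2 s)" for s
      have D1: "(f has_real_derivative f1 s) (at s)" for s
        unfolding fdef f1_def using DERIV_fun_powr[OF K1 kp, of "p - 1"] by simp
      have D2: "(f1 has_real_derivative f2 s) (at s)" for s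
      proof -
        have "((\<lambda>t. k t powr (p - 1 - 1)) has_real_derivative (p - 1 - 1) * k s powr (p - 1 - 1 - 1) * k1 s) (at s)"
          using DERIV_fun_powr[OF K1 kp, of "p - 1 - 1"] by simp
        from DERIV_cmult[OF DERIV_mult[OF this K2], of "p - 1"]
        show ?thesis unfolding f1_def[abs_def] f2_def by (simp add: algebra_simps)
      qed
      have "deriv f = f1" using D1 DERIV_imp_deriv by blast
      moreover have "deriv f1 = f2" using D2 DERIV_imp_deriv by blast
      ultimately have eq2: "p * f2 s + (p - 1) * k s powr (p + 1) + p * k s powr (p - 1) = 0" for s
        using eq[of s] unfolding pp1 pp2 by simp
      have "f2 s \<noteq> 0" for s
      proof
        assume "f2 s = 0"
        have a: "k s powr (p + 1) = k s powr (p - 1) * (k s)^2"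
        proof -
          have "k s powr (p + 1) = k s powr ((p - 1) + 2)" by (simp add: add.commute)
          also have "\<dots> = k s powr (p - 1) * k s powr 2" by (rule powr_add)
          also have "k s powr 2 = (k s)^2" using kp[of s] by (simp add: powr_numeral)
          finally show ?thesis .
        qed
        have b: "k s powr (p - 1) > 0" using kp[of s] by simp
        have c: "(k s)^2 > 0" using kp[of s] by simp
        from eq2[of s] \<open>f2 s = 0\<close> have "(p - 1) * (k s powr (p - 1) * (k s)^2) + p * k s powr (p - 1) = 0"
          unfolding a by simp
        then have "k s powr (p - 1) * ((p - 1) * (k s)^2 + p) = 0"
          by (simp only: distrib_left mult_ac)
        moreover have "(p - 1) * (k s)^2 + p \<noteq> 0"
          using pcase
        proof
          assume "p < 0"
          then have "(p - 1) * (k s)^2 < 0" using c by (intro mult_neg_pos) auto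
          with \<open>p < 0\<close> show ?thesis by linarith
        next
          assume "1 < p"
          then have "(p - 1) * (k s)^2 > 0" using c by (intro mult_pos_pos) auto
          with \<open>1 < p\<close> show ?thesis by linarith
        qed
        ultimately show False using b by simp
      qed
      then show ?thesis using periodic_rolle[OF D1 D2 _ L(1) fper] by blast
    qed
  qed
qed

end
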